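(* Consider the stochastic process $(S_t, A_t, R_{t+1})_{t\in\mathbb{Z}}$ generated by following a behavior policy $\mu$ in a Markov decision process, with target policy $\pi$, importance sampling ratios $\rho_t = \pi(S_t,A_t)/\mu(S_t,A_t)$, state-based discount $\gamma_t=\gamma(S_t)\in[0,1]$, state-based trace parameter $\lambda_t=\lambda(S_t)\in[0,1]$, a second trace function $\bar\lambda:\mathcal{S}\to[0,1]$ with $\bar\lambda_t=\bar\lambda(S_t)$, feature vectors $\mathbf{x}_t=\mathbf{x}(S_t)\in\mathbb{R}^n$, a fixed main weight vector $\mathbf{w}\in\mathbb{R}^n$ and a fixed weight vector $\mathbf{w}^{\mathrm{sq}}\in\mathbb{R}^n$. Define $\bar G_t = R_{t+1}+\gamma_{t+1}(1-\lambda_{t+1})\mathbf{x}_{t+1}^\top\mathbf{w}$, the $\lambda$-return $G^\lambda_t=\rho_t(\bar G_t+\gamma_{t+1}\lambda_{t+1}G^\lambda_{t+1})$, $\bar r_{t+1}=\rho_t^2\bar G_t^2+2\rho_t^2\gamma_{t+1}\lambda_{t+1}\bar G_t G^\lambda_{t+1}$, $\bar\gamma_{t+1}=\rho_t^2\gamma_{t+1}^2\lambda_{t+1}^2$, the $\bar\lambda$-squared-return $\bar V^{\bar\lambda}_t=\bar r_{t+1}+\bar\gamma_{t+1}\big((1-\bar\lambda_{t+1})\mathbf{x}_{t+1}^\top\mathbf{w}^{\mathrm{sq}}+\bar\lambda_{t+1}\bar V^{\bar\lambda}_{t+1}\big)$, and $\delta^{\bar\lambda}_t=\bar V^{\bar\lambda}_t-\mathbf{x}_t^\top\mathbf{w}^{\mathrm{sq}}$.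 Let $\bar g_{t+1}$ be an unbiased estimate of $\mathbb{E}[G^\lambda_{t+1}\mid S_{t+1}]$, i.e. $\mathbb{E}[\bar g_{t+1}\mid \mathcal{F}_{t+1}]=\mathbb{E}[G^\lambda_{t+1}\mid S_{t+1}]$, where $\mathcal{F}_{t+1}$ is the history $(\ldots,S_t,A_t,R_{t+1},S_{t+1})$ (and similarly at every time step). Define $\bar\delta_t=(\rho_t^2\bar G_t^2+2\rho_t^2\gamma_{t+1}\lambda_{t+1}\bar G_t\bar g_{t+1})+\bar\gamma_{t+1}\mathbf{x}_{t+1}^\top\mathbf{w}^{\mathrm{sq}}-\mathbf{x}_t^\top\mathbf{w}^{\mathrm{sq}}$ and the trace $\bar{\mathbf{z}}_t=\mathbf{x}_t+\bar\gamma_t\bar\lambda_t\bar{\mathbf{z}}_{t-1}$. Then $$\mathbb{E}[\delta^{\bar\lambda}_t\mathbf{x}_t]=\mathbb{E}[\bar\delta_t\bar{\mathbf{z}}_t].$$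
   Context: Expectations $\mathbb{E}$ are taken with respect to the stationary behavior of the process induced by following $\mu$ (so expectations of time-shifted quantities coincide), and all quantities involved (the recursively defined returns and the trace) are assumed well defined with finite expectations. The MDP has finite state set $\mathcal{S}$, action set $\mathcal{A}$, transition kernel $P$; the Markov property holds. *)

theory Defs
  imports "HOL-Probability.Probability"
begin

text \<open>
  Process conventions: S t, A t are the state and action at time t (t :: int);
  R t is the reward received at time t, so the paper's R_{t+1} is R (t+1).
\<close>

definition rho ::
  "('s \<Rightarrow> 'a \<Rightarrow> real) \<Rightarrow> ('s \<Rightarrow> 'a \<Rightarrow> real) \<Rightarrow> (int \<Rightarrow> 'w \<Rightarrow> 's) \<Rightarrow> (int \<Rightarrow> 'w \<Rightarrow> 'a)
   \<Rightarrow> int \<Rightarrow> 'w \<Rightarrow> real" where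
  "rho ppi mu S A t \<omega> = ppi (S t \<omega>) (A t \<omega>) / mu (S t \<omega>) (A t \<omega>)"

definition Gbar ::
  "('s \<Rightarrow> real) \<Rightarrow> ('s \<Rightarrow> real) \<Rightarrow> ('s \<Rightarrow> real^'n) \<Rightarrow> real^'n \<Rightarrow> (int \<Rightarrow> 'w \<Rightarrow> 's)
   \<Rightarrow> (int \<Rightarrow> 'w \<Rightarrow> real) \<Rightarrow> int \<Rightarrow> 'w \<Rightarrow> real" where
  "Gbar gam lam x w S R t \<omega> =
     R (t+1) \<omega> + gam (S (t+1) \<omega>) * (1 - lam (S (t+1) \<omega>)) * (x (S (t+1) \<omega>) \<bullet> w)"

text \<open>k-th term of the unrolled lambda-return
  G^lambda_t = rho_t (Gbar_t + gamma_{t+1} lambda_{t+1} G^lambda_{t+1}).\<close>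
definition Glam_term where
  "Glam_term ppi mu gam lam x w S A R t \<omega> (k::nat) =
     (\<Prod>j<k. rho ppi mu S A (t + int j) \<omega> * gam (S (t + int j + 1) \<omega>) * lam (S (t + int j + 1) \<omega>))
     * rho ppi mu S A (t + int k) \<omega> * Gbar gam lam x w S R (t + int k) \<omega>"

definition Glam where
  "Glam ppi mu gam lam x w S A R t \<omega> = (\<Sum>k. Glam_term ppi mu gam lam x w S A R t \<omega> k)"

text \<open>rbar t is the paper's \<open>r\<close>-bar with index t, i.e.
  rbar_{t} = rho_{t-1}^2 Gbar_{t-1}^2 + 2 rho_{t-1}^2 gamma_t lambda_t Gbar_{t-1} G^lambda_t.\<close>
definition rbar where
  "rbar ppi mu gam lam x w S A R t \<omega> =
     (rho ppi mu S A (t-1) \<omega>)\<^sup>2 * (Gbar gam lam x w S R (t-1) \<omega>)\<^sup>2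
     + 2 * (rho ppi mu S A (t-1) \<omega>)\<^sup>2 * gam (S t \<omega>) * lam (S t \<omega>)
         * Gbar gam lam x w S R (t-1) \<omega> * Glam ppi mu gam lam x w S A R t \<omega>"

text \<open>gambar t is the paper's gamma-bar with index t: rho_{t-1}^2 gamma_t^2 lambda_t^2.\<close>
definition gambar where
  "gambar ppi mu gam lam S A t \<omega> =
     (rho ppi mu S A (t-1) \<omega>)\<^sup>2 * (gam (S t \<omega>))\<^sup>2 * (lam (S t \<omega>))\<^sup>2"

text \<open>k-th term of the unrolled lambda-bar squared return
  Vbar_t = rbar_{t+1} + gambar_{t+1}((1-lamb_{t+1}) x_{t+1}^T wsq + lamb_{t+1} Vbar_{t+1}).\<close>
definition Vbar_term where
  "Vbar_term ppi mu gam lam lamb x w wsq S A R t \<omega> (k::nat) =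
     (\<Prod>j<k. gambar ppi mu gam lam S A (t + int j + 1) \<omega> * lamb (S (t + int j + 1) \<omega>))
     * (rbar ppi mu gam lam x w S A R (t + int k + 1) \<omega>
        + gambar ppi mu gam lam S A (t + int k + 1) \<omega> * (1 - lamb (S (t + int k + 1) \<omega>))
            * (x (S (t + int k + 1) \<omega>) \<bullet> wsq))"

definition Vbar where
  "Vbar ppi mu gam lam lamb x w wsq S A R t \<omega> =
     (\<Sum>k. Vbar_term ppi mu gam lam lamb x w wsq S A R t \<omega> k)"

definition delta_lamb where
  "delta_lamb ppi mu gam lam lamb x w wsq S A R t \<omega> =
     Vbar ppi mu gam lam lamb x w wsq S A R t \<omega> - x (S t \<omega>) \<bullet> wsq"

text \<open>deltabar_t, with gb the estimate process (gb (t+1) is the paper's g-bar_{t+1}).\<close>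
definition delta_bar where
  "delta_bar ppi mu gam lam x w wsq S A R gb t \<omega> =
     ((rho ppi mu S A t \<omega>)\<^sup>2 * (Gbar gam lam x w S R t \<omega>)\<^sup>2
      + 2 * (rho ppi mu S A t \<omega>)\<^sup>2 * gam (S (t+1) \<omega>) * lam (S (t+1) \<omega>)
          * Gbar gam lam x w S R t \<omega> * gb (t+1) \<omega>)
     + gambar ppi mu gam lam S A (t+1) \<omega> * (x (S (t+1) \<omega>) \<bullet> wsq)
     - x (S t \<omega>) \<bullet> wsq"

text \<open>Unrolled trace zbar_t = x_t + gambar_t lamb_t zbar_{t-1}
  = sum_k (prod_{j<k} gambar_{t-j} lamb_{t-j}) x_{t-k}.\<close>
definition trace_coef where
  "trace_coef ppi mu gam lam lamb S A t \<omega> (k::nat) =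
     (\<Prod>j<k. gambar ppi mu gam lam S A (t - int j) \<omega> * lamb (S (t - int j) \<omega>))"

definition zbar :: "_ \<Rightarrow> _ \<Rightarrow> _ \<Rightarrow> _ \<Rightarrow> _ \<Rightarrow> ('s \<Rightarrow> real^'n) \<Rightarrow> _ \<Rightarrow> _ \<Rightarrow> int \<Rightarrow> _ \<Rightarrow> real^'n" where
  "zbar ppi mu gam lam lamb x S A t \<omega> =
     (\<Sum>k. trace_coef ppi mu gam lam lamb S A t \<omega> k *\<^sub>R x (S (t - int k) \<omega>))"

definition abs_trace where
  "abs_trace ppi mu gam lam lamb x S A t \<omega> =
     (\<Sum>k. \<bar>trace_coef ppi mu gam lam lamb S A t \<omega> k\<bar> * norm (x (S (t - int k) \<omega>)))"

definition gen_sigma ::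
  "'w measure \<Rightarrow> (int \<Rightarrow> 'w \<Rightarrow> 's) \<Rightarrow> (int \<Rightarrow> 'w \<Rightarrow> 'a) \<Rightarrow> (int \<Rightarrow> 'w \<Rightarrow> real)
   \<Rightarrow> int set \<Rightarrow> int set \<Rightarrow> int set \<Rightarrow> 'w measure" where
  "gen_sigma M S A R TS TA TR = sigma (space M)
     ({S s -` B \<inter> space M | s B. s \<in> TS}
      \<union> {A s -` B \<inter> space M | s B. s \<in> TA}
      \<union> {R s -` B \<inter> space M | s B. s \<in> TR \<and> B \<in> sets borel})"

text \<open>History F_t = (..., S_{t-1}, A_{t-1}, R_t, S_t).\<close>
definition hist where
  "hist M S A R t = gen_sigma M S A R {..t} {..<t} {..t}"

definition histA where
  "histA M S A R t = gen_sigma M S A R {..t} {..t} {..t}"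

definition state_sigma where
  "state_sigma M S A R t = gen_sigma M S A R {t} {} {}"

definition future where
  "future M S A R t = gen_sigma M S A R {t..} {t..} {t<..}"

end

theory Submission
  imports Defs
begin


lemma Vbar_term_shift:
  assumes hS: "\<And>s. S s \<omega>' = S (s+1) \<omega>" and hA: "\<And>s. A s \<omega>' = A (s+1) \<omega>" and hR: "\<And>s. R s \<omega>' = R (s+1) \<omega>"
  shows "Vbar_term ppi mu gam lam lamb x w wsq S A R t \<omega>' k = Vbar_term ppi mu gam lam lamb x w wsq S A R (t+1) \<omega> k"
  unfolding Vbar_term_def rbar_def Glam_def Glam_term_def gambar_def rho_def Gbar_def
  by (simp add: hS hA hR algebra_simps)

lemma trace_coef_shift:
  assumes hS: "\<And>s. S s \<omega>' = S (s+1) \<omega>" and hA: "\<And>s. A s \<omega>' = A (s+1) \<omega>"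
  shows "trace_coef ppi mu gam lam lamb S A t \<omega>' k = trace_coef ppi mu gam lam lamb S A (t+1) \<omega> k"
  unfolding trace_coef_def gambar_def rho_def
  by (simp add: hS hA algebra_simps)

lemma Vbar_term_Suc:
  "Vbar_term ppi mu gam lam lamb x w wsq S A R t \<omega> (Suc k) =
   (gambar ppi mu gam lam S A (t+1) \<omega> * lamb (S (t+1) \<omega>)) * Vbar_term ppi mu gam lam lamb x w wsq S A R (t+1) \<omega> k"
  unfolding Vbar_term_def
  by (simp only: prod.lessThan_Suc_shift) (simp add: algebra_simps)

lemma trace_coef_Suc:
  "trace_coef ppi mu gam lam lamb S A t \<omega> (Suc k) =
   (gambar ppi mu gam lam S A t \<omega> * lamb (S t \<omega>)) * trace_coef ppi mu gam lam lamb S A (t-1) \<omega> k"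
  unfolding trace_coef_def
  by (simp only: prod.lessThan_Suc_shift) (simp add: algebra_simps)



lemma gen_sigma_space: "space (gen_sigma M S A R TS TA TR) = space M"
  unfolding gen_sigma_def by (simp add: space_measure_of_conv)

lemma gen_sigma_sets: "sets (gen_sigma M S A R TS TA TR) = sigma_sets (space M)
     ({S s -` B \<inter> space M | s B. s \<in> TS}
      \<union> {A s -` B \<inter> space M | s B. s \<in> TA}
      \<union> {R s -` B \<inter> space M | s B. s \<in> TR \<and> B \<in> sets borel})"
  unfolding gen_sigma_def by (rule sets_measure_of) auto

lemma gen_sigma_subalg:
  assumes "\<forall>s. S s \<in> M \<rightarrow>\<^sub>M count_space UNIV" "\<forall>s. A s \<in> M \<rightarrow>\<^sub>M count_space UNIV"
    "\<forall>s. R s \<in> borel_measurable M"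
  shows "subalgebra M (gen_sigma M S A R TS TA TR)"
proof -
  have G: "{S s -` B \<inter> space M | s B. s \<in> TS}
      \<union> {A s -` B \<inter> space M | s B. s \<in> TA}
      \<union> {R s -` B \<inter> space M | s B. s \<in> TR \<and> B \<in> sets borel} \<subseteq> sets M"
  proof (intro Un_least subsetI; elim CollectE exE conjE)
    fix y s B assume "y = S s -` B \<inter> space M"
    then show "y \<in> sets M" using measurable_sets[of "S s" M "count_space UNIV" B] assms by auto
  next
    fix y s B assume "y = A s -` B \<inter> space M"
    then show "y \<in> sets M" using measurable_sets[of "A s" M "count_space UNIV" B] assms by auto
  next
    fix y s B assume "y = R s -` B \<inter> space M" "B \<in> sets borel"
    then show "y \<in> sets M" using measurable_sets[of "R s" M borel B] assms by auto
  qed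
  show ?thesis unfolding subalgebra_def gen_sigma_space gen_sigma_sets
    using sets.sigma_sets_subset[OF G] by simp
qed

lemma gen_sigma_S: "s \<in> TS \<Longrightarrow> S s \<in> gen_sigma M S A R TS TA TR \<rightarrow>\<^sub>M count_space UNIV"
  apply (rule measurableI) apply simp apply (simp only: gen_sigma_space gen_sigma_sets) apply (rule sigma_sets.Basic) apply (rule UnI1, rule UnI1) apply blast done
lemma gen_sigma_A: "s \<in> TA \<Longrightarrow> A s \<in> gen_sigma M S A R TS TA TR \<rightarrow>\<^sub>M count_space UNIV"
  apply (rule measurableI) apply simp apply (simp only: gen_sigma_space gen_sigma_sets) apply (rule sigma_sets.Basic) apply (rule UnI1, rule UnI2) apply blast done
lemma gen_sigma_R: "s \<in> TR \<Longrightarrow> R s \<in> borel_measurable (gen_sigma M S A R TS TA TR)"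
  apply (rule measurableI) apply simp apply (simp only: gen_sigma_space gen_sigma_sets) apply (rule sigma_sets.Basic) apply (rule UnI2) apply blast done

lemma rho_meas: fixes S :: "int \<Rightarrow> _ \<Rightarrow> 's::finite" and A :: "int \<Rightarrow> _ \<Rightarrow> 'a::finite"
  assumes [measurable]: "S s \<in> N \<rightarrow>\<^sub>M count_space UNIV" "A s \<in> N \<rightarrow>\<^sub>M count_space UNIV" shows
  "rho ppi mu S A s \<in> borel_measurable N"
  unfolding rho_def by measurable

lemma Gbar_meas: fixes S :: "int \<Rightarrow> _ \<Rightarrow> 's::finite" and A :: "int \<Rightarrow> _ \<Rightarrow> 'a::finite"
  assumes [measurable]: "S (s+1) \<in> N \<rightarrow>\<^sub>M count_space UNIV" "R (s+1) \<in> borel_measurable N" shows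
  "Gbar gam lam x w S R s \<in> borel_measurable N"
  unfolding Gbar_def by measurable

lemma gambar_meas: fixes S :: "int \<Rightarrow> _ \<Rightarrow> 's::finite" and A :: "int \<Rightarrow> _ \<Rightarrow> 'a::finite"
  assumes "S (s-1) \<in> N \<rightarrow>\<^sub>M count_space UNIV" "A (s-1) \<in> N \<rightarrow>\<^sub>M count_space UNIV"
  and [measurable]: "S s \<in> N \<rightarrow>\<^sub>M count_space UNIV" shows "gambar ppi mu gam lam S A s \<in> borel_measurable N"
proof -
  have [measurable]: "rho ppi mu S A (s-1) \<in> borel_measurable N" by (rule rho_meas) (use assms in auto)
  show ?thesis unfolding gambar_def by measurable
qed

lemma Glam_meas: fixes S :: "int \<Rightarrow> _ \<Rightarrow> 's::finite" and A :: "int \<Rightarrow> _ \<Rightarrow> 'a::finite"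
  assumes "\<And>k. S (t + int k) \<in> N \<rightarrow>\<^sub>M count_space UNIV" "\<And>k. A (t + int k) \<in> N \<rightarrow>\<^sub>M count_space UNIV"
    "\<And>k. R (t + int k + 1) \<in> borel_measurable N"
  shows "Glam ppi mu gam lam x w S A R t \<in> borel_measurable N"
proof -
  have S1: "S (t + int k + 1) \<in> N \<rightarrow>\<^sub>M count_space UNIV" for k
    using assms(1)[of "Suc k"] by (simp add: ac_simps)
  have [measurable]: "rho ppi mu S A (t + int k) \<in> borel_measurable N" for k
    by (rule rho_meas) (use assms in auto)
  have [measurable]: "Gbar gam lam x w S R (t + int k) \<in> borel_measurable N" for k
    by (rule Gbar_meas) (use assms S1 in auto)
  have [measurable]: "S (t + int k + 1) \<in> N \<rightarrow>\<^sub>M count_space UNIV" for k by (rule S1)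
  show ?thesis unfolding Glam_def Glam_term_def by measurable
qed

lemma trace_coef_meas:
  fixes S :: "int \<Rightarrow> _ \<Rightarrow> 's::finite" and A :: "int \<Rightarrow> _ \<Rightarrow> 'a::finite"
  assumes "\<And>j. S (t - int j) \<in> N \<rightarrow>\<^sub>M count_space UNIV" "\<And>j. A (t - int j - 1) \<in> N \<rightarrow>\<^sub>M count_space UNIV"
  shows "(\<lambda>\<omega>. trace_coef ppi mu gam lam lamb S A t \<omega> k) \<in> borel_measurable N"
proof -
  have [measurable]: "gambar ppi mu gam lam S A (t - int j) \<in> borel_measurable N" for j
    by (rule gambar_meas) (use assms(1)[of "Suc j"] assms(1)[of j] assms(2)[of j] in \<open>auto simp: algebra_simps\<close>)
  have [measurable]: "S (t - int j) \<in> N \<rightarrow>\<^sub>M count_space UNIV" for j by (rule assms(1))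
  show ?thesis unfolding trace_coef_def by measurable
qed

lemma zbar_meas:
  fixes S :: "int \<Rightarrow> _ \<Rightarrow> 's::finite" and A :: "int \<Rightarrow> _ \<Rightarrow> 'a::finite"
  assumes "\<And>j. S (t - int j) \<in> N \<rightarrow>\<^sub>M count_space UNIV" "\<And>j. A (t - int j - 1) \<in> N \<rightarrow>\<^sub>M count_space UNIV"
  shows "zbar ppi mu gam lam lamb x S A t \<in> borel_measurable N"
proof -
  have [measurable]: "(\<lambda>\<omega>. trace_coef ppi mu gam lam lamb S A t \<omega> k) \<in> borel_measurable N" for k
    by (rule trace_coef_meas; rule assms)
  have [measurable]: "S (t - int j) \<in> N \<rightarrow>\<^sub>M count_space UNIV" for j by (rule assms(1))
  show ?thesis unfolding zbar_def by measurable
qed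

lemma abs_trace_meas:
  fixes S :: "int \<Rightarrow> _ \<Rightarrow> 's::finite" and A :: "int \<Rightarrow> _ \<Rightarrow> 'a::finite"
  assumes "\<And>j. S (t - int j) \<in> N \<rightarrow>\<^sub>M count_space UNIV" "\<And>j. A (t - int j - 1) \<in> N \<rightarrow>\<^sub>M count_space UNIV"
  shows "abs_trace ppi mu gam lam lamb x S A t \<in> borel_measurable N"
proof -
  have [measurable]: "(\<lambda>\<omega>. trace_coef ppi mu gam lam lamb S A t \<omega> k) \<in> borel_measurable N" for k
    by (rule trace_coef_meas; rule assms)
  have [measurable]: "S (t - int j) \<in> N \<rightarrow>\<^sub>M count_space UNIV" for j by (rule assms(1))
  show ?thesis unfolding abs_trace_def by measurable
qed

lemma Vbar_meas:
  fixes S :: "int \<Rightarrow> _ \<Rightarrow> 's::finite" and A :: "int \<Rightarrow> _ \<Rightarrow> 'a::finite"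
  assumes [measurable]: "\<And>s. S s \<in> N \<rightarrow>\<^sub>M count_space UNIV" "\<And>s. A s \<in> N \<rightarrow>\<^sub>M count_space UNIV"
    "\<And>s. R s \<in> borel_measurable N"
  shows "Vbar ppi mu gam lam lamb x w wsq S A R t \<in> borel_measurable N"
proof -
  have [measurable]: "Glam ppi mu gam lam x w S A R s \<in> borel_measurable N" for s
    by (rule Glam_meas) (use assms in auto)
  have [measurable]: "rho ppi mu S A s \<in> borel_measurable N" for s
    by (rule rho_meas) (use assms in auto)
  have [measurable]: "Gbar gam lam x w S R s \<in> borel_measurable N" for s
    by (rule Gbar_meas) (use assms in auto)
  have [measurable]: "gambar ppi mu gam lam S A s \<in> borel_measurable N" for s
    by (rule gambar_meas) (use assms in auto)
  show ?thesis unfolding Vbar_def Vbar_term_def rbar_def by measurable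
qed



locale L =
  fixes M :: "'w measure"
    and S :: "int \<Rightarrow> 'w \<Rightarrow> 's::finite"
    and A :: "int \<Rightarrow> 'w \<Rightarrow> 'a::finite"
    and R :: "int \<Rightarrow> 'w \<Rightarrow> real"
    and ppi mu :: "'s \<Rightarrow> 'a \<Rightarrow> real"
    and gam lam lamb :: "'s \<Rightarrow> real"
    and x :: "'s \<Rightarrow> real^'n"
    and w wsq :: "real^'n"
    and gb :: "int \<Rightarrow> 'w \<Rightarrow> real"
    and theta :: "'w \<Rightarrow> 'w"
  assumes prob: "prob_space M"
    and S_meas: "\<forall>s. S s \<in> M \<rightarrow>\<^sub>M count_space UNIV"
    and A_meas: "\<forall>s. A s \<in> M \<rightarrow>\<^sub>M count_space UNIV"
    and R_meas: "\<forall>s. R s \<in> borel_measurable M"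
    and gam_range: "\<forall>s. 0 \<le> gam s \<and> gam s \<le> 1"
    and lam_range: "\<forall>s. 0 \<le> lam s \<and> lam s \<le> 1"
    and markov: "\<forall>s Y. Y \<in> borel_measurable (future M S A R s) \<longrightarrow> integrable M Y \<longrightarrow>
          (AE \<omega> in M. real_cond_exp M (hist M S A R s) Y \<omega>
                        = real_cond_exp M (state_sigma M S A R s) Y \<omega>)"
    and shift_meas: "theta \<in> M \<rightarrow>\<^sub>M M"
    and shift_preserving: "distr M M theta = M"
    and shift_process: "\<forall>s. \<forall>\<omega>\<in>space M.
          S (s+1) \<omega> = S s (theta \<omega>) \<and> A (s+1) \<omega> = A s (theta \<omega>) \<and> R (s+1) \<omega> = R s (theta \<omega>)"
    and unbiased: "\<forall>s. AE \<omega> in M.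
          real_cond_exp M (hist M S A R s) (gb s) \<omega>
            = real_cond_exp M (state_sigma M S A R s) (Glam ppi mu gam lam x w S A R s) \<omega>"
    and well_defined: "\<forall>s. \<forall>\<omega>\<in>space M.
          summable (Glam_term ppi mu gam lam x w S A R s \<omega>)
          \<and> summable (Vbar_term ppi mu gam lam lamb x w wsq S A R s \<omega>)
          \<and> summable (\<lambda>k. \<bar>trace_coef ppi mu gam lam lamb S A s \<omega> k\<bar> * norm (x (S (s - int k) \<omega>)))"
    and finite_expectations: "\<forall>s.
          integrable M (Glam ppi mu gam lam x w S A R s)
          \<and> integrable M (gb s)
          \<and> integrable M (abs_trace ppi mu gam lam lamb x S A s)
          \<and> integrable M (\<lambda>\<omega>. \<bar>Vbar ppi mu gam lam lamb x w wsq S A R s \<omega>\<bar>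
                                * abs_trace ppi mu gam lam lamb x S A s \<omega>)
          \<and> integrable M (\<lambda>\<omega>. (rho ppi mu S A s \<omega>)\<^sup>2 * (Gbar gam lam x w S R s \<omega>)\<^sup>2
                                * abs_trace ppi mu gam lam lamb x S A s \<omega>)
          \<and> integrable M (\<lambda>\<omega>. \<bar>(rho ppi mu S A s \<omega>)\<^sup>2 * gam (S (s+1) \<omega>) * lam (S (s+1) \<omega>)
                                   * Gbar gam lam x w S R s \<omega> * Glam ppi mu gam lam x w S A R (s+1) \<omega>\<bar>
                                * abs_trace ppi mu gam lam lamb x S A s \<omega>)
          \<and> integrable M (\<lambda>\<omega>. \<bar>(rho ppi mu S A s \<omega>)\<^sup>2 * gam (S (s+1) \<omega>) * lam (S (s+1) \<omega>)
                                   * Gbar gam lam x w S R s \<omega> * gb (s+1) \<omega>\<bar>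
                                * abs_trace ppi mu gam lam lamb x S A s \<omega>)"
begin

abbreviation "rh \<equiv> rho ppi mu S A"
abbreviation "Gb \<equiv> Gbar gam lam x w S R"
abbreviation "GL \<equiv> Glam ppi mu gam lam x w S A R"
abbreviation "VB \<equiv> Vbar ppi mu gam lam lamb x w wsq S A R"
abbreviation "VT \<equiv> Vbar_term ppi mu gam lam lamb x w wsq S A R"
abbreviation "D \<equiv> delta_lamb ppi mu gam lam lamb x w wsq S A R"
abbreviation "gbr \<equiv> gambar ppi mu gam lam S A"
abbreviation "b s \<omega> \<equiv> gambar ppi mu gam lam S A s \<omega> * lamb (S s \<omega>)"
abbreviation "c \<equiv> trace_coef ppi mu gam lam lamb S A"
abbreviation "X s \<omega> \<equiv> x (S s \<omega>)"
abbreviation "a \<equiv> delta_bar ppi mu gam lam x w wsq S A R GL"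
abbreviation "ab \<equiv> delta_bar ppi mu gam lam x w wsq S A R gb"
abbreviation "z \<equiv> zbar ppi mu gam lam lamb x S A"
abbreviation "AT \<equiv> abs_trace ppi mu gam lam lamb x S A"

lemma Sm[measurable]: "S s \<in> M \<rightarrow>\<^sub>M count_space UNIV" using S_meas by auto
lemma Am[measurable]: "A s \<in> M \<rightarrow>\<^sub>M count_space UNIV" using A_meas by auto
lemma Rm[measurable]: "R s \<in> borel_measurable M" using R_meas by auto

lemma rh_m[measurable]: "rh s \<in> borel_measurable M" by (rule rho_meas) auto
lemma Gb_m[measurable]: "Gb s \<in> borel_measurable M" by (rule Gbar_meas) auto
lemma GL_m[measurable]: "GL s \<in> borel_measurable M" by (rule Glam_meas) auto
lemma VB_m[measurable]: "VB s \<in> borel_measurable M" by (rule Vbar_meas) auto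
lemma gbr_m[measurable]: "gbr s \<in> borel_measurable M" by (rule gambar_meas) auto
lemma c_m[measurable]: "(\<lambda>\<omega>. c s \<omega> k) \<in> borel_measurable M" by (rule trace_coef_meas) auto
lemma z_m[measurable]: "z s \<in> borel_measurable M" by (rule zbar_meas) auto
lemma AT_m[measurable]: "AT s \<in> borel_measurable M" by (rule abs_trace_meas) auto
lemma gb_m[measurable]: "gb s \<in> borel_measurable M" using finite_expectations by auto
lemma D_m[measurable]: "D s \<in> borel_measurable M" unfolding delta_lamb_def by measurable
lemma a_m[measurable]: "a s \<in> borel_measurable M" unfolding delta_bar_def by measurable
lemma ab_m[measurable]: "ab s \<in> borel_measurable M" unfolding delta_bar_def by measurable

lemma th_space: "\<omega> \<in> space M \<Longrightarrow> theta \<omega> \<in> space M"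
  using shift_meas by (auto simp: measurable_def)

lemma shS: "\<omega> \<in> space M \<Longrightarrow> S s (theta \<omega>) = S (s+1) \<omega>" using shift_process by auto
lemma shA: "\<omega> \<in> space M \<Longrightarrow> A s (theta \<omega>) = A (s+1) \<omega>" using shift_process by auto
lemma shR: "\<omega> \<in> space M \<Longrightarrow> R s (theta \<omega>) = R (s+1) \<omega>" using shift_process by auto

lemma VB_shift: "\<omega> \<in> space M \<Longrightarrow> VB t (theta \<omega>) = VB (t+1) \<omega>"
proof -
  assume w: "\<omega> \<in> space M"
  have "VT t (theta \<omega>) = VT (t+1) \<omega>"
    by (rule ext, rule Vbar_term_shift) (use w in \<open>auto simp: shS shA shR\<close>)
  then show ?thesis unfolding Vbar_def by simp
qed

lemma D_shift: "\<omega> \<in> space M \<Longrightarrow> D t (theta \<omega>) = D (t+1) \<omega>"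
  unfolding delta_lamb_def by (simp add: VB_shift shS)

lemma c_shift: "\<omega> \<in> space M \<Longrightarrow> c t (theta \<omega>) k = c (t+1) \<omega> k"
  by (rule trace_coef_shift) (auto simp: shS shA)

lemma VB_rec: "\<omega> \<in> space M \<Longrightarrow> VB t \<omega> = VT t \<omega> 0 + b (t+1) \<omega> * VB (t+1) \<omega>"
proof -
  assume w: "\<omega> \<in> space M"
  have s1: "summable (VT t \<omega>)" "summable (VT (t+1) \<omega>)" using well_defined w by auto
  have "VB t \<omega> = VT t \<omega> 0 + (\<Sum>k. VT t \<omega> (Suc k))"
    unfolding Vbar_def by (simp add: suminf_split_head[OF s1(1)])
  also have "(\<Sum>k. VT t \<omega> (Suc k)) = (\<Sum>k. b (t+1) \<omega> * VT (t+1) \<omega> k)"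
    by (simp only: Vbar_term_Suc)
  also have "\<dots> = b (t+1) \<omega> * VB (t+1) \<omega>"
    unfolding Vbar_def by (rule suminf_mult[OF s1(2)])
  finally show ?thesis .
qed

lemma D_rec: "\<omega> \<in> space M \<Longrightarrow> D t \<omega> = a t \<omega> + b (t+1) \<omega> * D (t+1) \<omega>"
  unfolding delta_lamb_def delta_bar_def
  by (subst VB_rec) (auto simp: Vbar_term_def rbar_def algebra_simps)

end

context L begin

definition "Cx = (\<Sum>s\<in>UNIV. \<bar>x s \<bullet> wsq\<bar>)"
definition "Cr = (\<Sum>s\<in>UNIV. \<Sum>a\<in>UNIV. \<bar>ppi s a / mu s a\<bar>)"

lemma Cx_bound: "\<bar>x s \<bullet> wsq\<bar> \<le> Cx"
  unfolding Cx_def by (rule member_le_sum) auto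

lemma Cx_nonneg: "0 \<le> Cx" unfolding Cx_def by (rule sum_nonneg) auto

lemma rh_bound: "\<bar>rh s \<omega>\<bar> \<le> Cr"
proof -
  have "\<bar>rh s \<omega>\<bar> \<le> (\<Sum>a\<in>UNIV. \<bar>ppi (S s \<omega>) a / mu (S s \<omega>) a\<bar>)"
    unfolding rho_def by (rule member_le_sum) auto
  also have "\<dots> \<le> Cr" unfolding Cr_def
    by (rule member_le_sum[where f="\<lambda>s. \<Sum>a\<in>UNIV. \<bar>ppi s a / mu s a\<bar>"]) (auto intro: sum_nonneg)
  finally show ?thesis .
qed

lemma gbr_bound: "\<bar>gbr s \<omega>\<bar> \<le> Cr\<^sup>2"
proof -
  have g: "(gam (S s \<omega>))\<^sup>2 \<le> 1" "(lam (S s \<omega>))\<^sup>2 \<le> 1" "0 \<le> (gam (S s \<omega>))\<^sup>2" "0 \<le> (lam (S s \<omega>))\<^sup>2"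
    using gam_range lam_range by (auto simp: power_le_one abs_le_iff)
  have r: "(rh (s-1) \<omega>)\<^sup>2 \<le> Cr\<^sup>2"
    using power_mono[OF rh_bound[of "s-1" \<omega>] abs_ge_zero, of 2] by (simp add: power2_abs)
  have "\<bar>gbr s \<omega>\<bar> = (rh (s-1) \<omega>)\<^sup>2 * ((gam (S s \<omega>))\<^sup>2 * (lam (S s \<omega>))\<^sup>2)"
    unfolding gambar_def using g by (simp add: abs_mult mult.assoc)
  also have "\<dots> \<le> Cr\<^sup>2 * 1"
    by (rule mult_mono[OF r mult_le_one[OF g(1) g(4) g(2)] zero_le_power2 mult_nonneg_nonneg[OF g(3) g(4)]])
  finally show ?thesis by simp
qed

lemma AT_partial: "\<omega> \<in> space M \<Longrightarrow> (\<Sum>k<K. \<bar>c t \<omega> k\<bar> * norm (X (t - int k) \<omega>)) \<le> AT t \<omega>"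
  unfolding abs_trace_def
  by (rule sum_le_suminf) (use well_defined in auto)

lemma AT_term: "\<omega> \<in> space M \<Longrightarrow> \<bar>c t \<omega> k\<bar> * norm (X (t - int k) \<omega>) \<le> AT t \<omega>"
  unfolding abs_trace_def
  by (rule sum_le_suminf[where I="{k}", simplified]) (use well_defined in auto)

lemma AT_nonneg: "\<omega> \<in> space M \<Longrightarrow> 0 \<le> AT t \<omega>"
  using AT_partial[of \<omega> t 0] by simp

lemma z_summable: "\<omega> \<in> space M \<Longrightarrow> summable (\<lambda>k. c t \<omega> k *\<^sub>R X (t - int k) \<omega>)"
  by (rule summable_norm_cancel) (use well_defined in auto)

lemma z_norm: "\<omega> \<in> space M \<Longrightarrow> norm (z t \<omega>) \<le> AT t \<omega>"
  unfolding zbar_def abs_trace_def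
  using summable_norm[of "\<lambda>k. c t \<omega> k *\<^sub>R X (t - int k) \<omega>"] well_defined by auto

lemma z_comp: "\<omega> \<in> space M \<Longrightarrow> \<bar>z t \<omega> $ i\<bar> \<le> AT t \<omega>"
  using z_norm[of \<omega> t] component_le_norm_cart[of "z t \<omega>" i] by linarith

end

context L begin

lemma db_bound: "\<bar>delta_bar ppi mu gam lam x w wsq S A R g t \<omega>\<bar> \<le>
   (rh t \<omega>)\<^sup>2 * (Gb t \<omega>)\<^sup>2 + 2 * \<bar>(rh t \<omega>)\<^sup>2 * gam (S (t+1) \<omega>) * lam (S (t+1) \<omega>) * Gb t \<omega> * g (t+1) \<omega>\<bar>
   + Cr\<^sup>2 * Cx + Cx"
proof -
  have p: "\<bar>gbr (t+1) \<omega> * (X (t+1) \<omega> \<bullet> wsq)\<bar> \<le> Cr\<^sup>2 * Cx"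
    unfolding abs_mult by (rule mult_mono[OF gbr_bound Cx_bound]) auto
  have q: "\<bar>X t \<omega> \<bullet> wsq\<bar> \<le> Cx" by (rule Cx_bound)
  have v: "\<bar>2 * (rh t \<omega>)\<^sup>2 * gam (S (t+1) \<omega>) * lam (S (t+1) \<omega>) * Gb t \<omega> * g (t+1) \<omega>\<bar>
     = 2 * \<bar>(rh t \<omega>)\<^sup>2 * gam (S (t+1) \<omega>) * lam (S (t+1) \<omega>) * Gb t \<omega> * g (t+1) \<omega>\<bar>"
    by (simp add: abs_mult)
  have u: "0 \<le> (rh t \<omega>)\<^sup>2 * (Gb t \<omega>)\<^sup>2" by simp
  show ?thesis unfolding delta_bar_def using p q v u by linarith
qed

lemma Fint:
  "integrable M (\<lambda>\<omega>. (rh t \<omega>)\<^sup>2 * (Gb t \<omega>)\<^sup>2 * AT t \<omega>)"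
  "integrable M (\<lambda>\<omega>. \<bar>(rh t \<omega>)\<^sup>2 * gam (S (t+1) \<omega>) * lam (S (t+1) \<omega>) * Gb t \<omega> * GL (t+1) \<omega>\<bar> * AT t \<omega>)"
  "integrable M (\<lambda>\<omega>. \<bar>(rh t \<omega>)\<^sup>2 * gam (S (t+1) \<omega>) * lam (S (t+1) \<omega>) * Gb t \<omega> * gb (t+1) \<omega>\<bar> * AT t \<omega>)"
  "integrable M (AT t)" "integrable M (\<lambda>\<omega>. \<bar>VB t \<omega>\<bar> * AT t \<omega>)"
  "integrable M (GL t)" "integrable M (gb t)"
  using finite_expectations by auto

lemma db_AT_int:
  assumes g: "g = GL \<or> g = gb"
  shows "integrable M (\<lambda>\<omega>. \<bar>delta_bar ppi mu gam lam x w wsq S A R g t \<omega>\<bar> * AT t \<omega>)"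
proof -
  let ?F = "\<lambda>\<omega>. (rh t \<omega>)\<^sup>2 * (Gb t \<omega>)\<^sup>2 * AT t \<omega> + 2 * (\<bar>(rh t \<omega>)\<^sup>2 * gam (S (t+1) \<omega>) * lam (S (t+1) \<omega>) * Gb t \<omega> * g (t+1) \<omega>\<bar> * AT t \<omega>)
     + (Cr\<^sup>2 * Cx + Cx) * AT t \<omega>"
  have Fi: "integrable M ?F" using g Fint by auto
  have gm[measurable]: "g s \<in> borel_measurable M" for s using g by auto
  show ?thesis
  proof (rule Bochner_Integration.integrable_bound[OF Fi])
    show "(\<lambda>\<omega>. \<bar>delta_bar ppi mu gam lam x w wsq S A R g t \<omega>\<bar> * AT t \<omega>) \<in> borel_measurable M"
      unfolding delta_bar_def by measurable
    show "AE \<omega> in M. norm (\<bar>delta_bar ppi mu gam lam x w wsq S A R g t \<omega>\<bar> * AT t \<omega>) \<le> norm (?F \<omega>)"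
    proof (rule AE_I2)
      fix \<omega> assume w: "\<omega> \<in> space M"
      have at: "0 \<le> AT t \<omega>" by (rule AT_nonneg[OF w])
      have "\<bar>delta_bar ppi mu gam lam x w wsq S A R g t \<omega>\<bar> * AT t \<omega> \<le> ?F \<omega>"
        using mult_right_mono[OF db_bound[of g t \<omega>] at] by (simp add: algebra_simps)
      moreover have "?F \<omega> \<le> norm (?F \<omega>)" by simp
      ultimately show "norm (\<bar>delta_bar ppi mu gam lam x w wsq S A R g t \<omega>\<bar> * AT t \<omega>) \<le> norm (?F \<omega>)"
        using at by (simp add: abs_mult)
    qed
  qed
qed

lemma D_bound: "\<bar>D t \<omega>\<bar> \<le> \<bar>VB t \<omega>\<bar> + Cx"
  unfolding delta_lamb_def using Cx_bound[of "S t \<omega>"] by linarith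

lemma D_AT_int: "integrable M (\<lambda>\<omega>. \<bar>D t \<omega>\<bar> * AT t \<omega>)"
proof (rule Bochner_Integration.integrable_bound)
  show "integrable M (\<lambda>\<omega>. \<bar>VB t \<omega>\<bar> * AT t \<omega> + Cx * AT t \<omega>)" using Fint by auto
  show "(\<lambda>\<omega>. \<bar>D t \<omega>\<bar> * AT t \<omega>) \<in> borel_measurable M" by measurable
  show "AE \<omega> in M. norm (\<bar>D t \<omega>\<bar> * AT t \<omega>) \<le> norm (\<bar>VB t \<omega>\<bar> * AT t \<omega> + Cx * AT t \<omega>)"
  proof (rule AE_I2)
    fix \<omega> assume w: "\<omega> \<in> space M"
    have at: "0 \<le> AT t \<omega>" by (rule AT_nonneg[OF w])
    have "\<bar>D t \<omega>\<bar> * AT t \<omega> \<le> \<bar>VB t \<omega>\<bar> * AT t \<omega> + Cx * AT t \<omega>"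
      using mult_right_mono[OF D_bound[of t \<omega>] at] by (simp add: algebra_simps)
    then show "norm (\<bar>D t \<omega>\<bar> * AT t \<omega>) \<le> norm (\<bar>VB t \<omega>\<bar> * AT t \<omega> + Cx * AT t \<omega>)"
      using at by (simp add: abs_mult)
  qed
qed

lemma term_int:
  assumes f[measurable]: "f \<in> borel_measurable M" and fi: "integrable M (\<lambda>\<omega>. \<bar>f \<omega>\<bar> * AT t \<omega>)"
  shows "integrable M (\<lambda>\<omega>. (f \<omega> * c t \<omega> K) *\<^sub>R X (t - int K) \<omega>)"
proof (rule Bochner_Integration.integrable_bound[OF fi])
  show "(\<lambda>\<omega>. (f \<omega> * c t \<omega> K) *\<^sub>R X (t - int K) \<omega>) \<in> borel_measurable M" by measurable
  show "AE \<omega> in M. norm ((f \<omega> * c t \<omega> K) *\<^sub>R X (t - int K) \<omega>) \<le> norm (\<bar>f \<omega>\<bar> * AT t \<omega>)"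
  proof (rule AE_I2)
    fix \<omega> assume w: "\<omega> \<in> space M"
    have at: "0 \<le> AT t \<omega>" by (rule AT_nonneg[OF w])
    have "norm ((f \<omega> * c t \<omega> K) *\<^sub>R X (t - int K) \<omega>) = \<bar>f \<omega>\<bar> * (\<bar>c t \<omega> K\<bar> * norm (X (t - int K) \<omega>))"
      by (simp add: abs_mult)
    also have "\<dots> \<le> \<bar>f \<omega>\<bar> * AT t \<omega>" by (rule mult_left_mono[OF AT_term[OF w]]) simp
    finally show "norm ((f \<omega> * c t \<omega> K) *\<^sub>R X (t - int K) \<omega>) \<le> norm (\<bar>f \<omega>\<bar> * AT t \<omega>)"
      using at by (simp add: abs_mult)
  qed
qed

lemma intP: "integrable M (\<lambda>\<omega>. (a t \<omega> * c t \<omega> K) *\<^sub>R X (t - int K) \<omega>)"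
  by (rule term_int) (use db_AT_int[of GL t] in auto)

lemma intT: "integrable M (\<lambda>\<omega>. (D t \<omega> * c t \<omega> K) *\<^sub>R X (t - int K) \<omega>)"
  by (rule term_int) (use D_AT_int[of t] in auto)

lemma stepC:
  "(\<integral>\<omega>. (D t \<omega> * c t \<omega> (Suc K)) *\<^sub>R X (t - int (Suc K)) \<omega> \<partial>M)
   = (\<integral>\<omega>. (D t \<omega> * c t \<omega> K) *\<^sub>R X (t - int K) \<omega> \<partial>M) - (\<integral>\<omega>. (a t \<omega> * c t \<omega> K) *\<^sub>R X (t - int K) \<omega> \<partial>M)"
proof -
  let ?h = "\<lambda>\<omega>. (D t \<omega> * c t \<omega> (Suc K)) *\<^sub>R X (t - int (Suc K)) \<omega>"
  have hm: "?h \<in> borel_measurable M" by measurable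
  have "(\<integral>\<omega>. ?h \<omega> \<partial>M) = (\<integral>\<omega>. ?h \<omega> \<partial>(distr M M theta))" by (simp add: shift_preserving)
  also have "\<dots> = (\<integral>\<omega>. ?h (theta \<omega>) \<partial>M)" by (rule integral_distr[OF shift_meas hm])
  also have "\<dots> = (\<integral>\<omega>. (D t \<omega> * c t \<omega> K) *\<^sub>R X (t - int K) \<omega> - (a t \<omega> * c t \<omega> K) *\<^sub>R X (t - int K) \<omega> \<partial>M)"
  proof (rule Bochner_Integration.integral_cong[OF refl])
    fix \<omega> assume w: "\<omega> \<in> space M"
    have e1: "X (t - int (Suc K)) (theta \<omega>) = X (t - int K) \<omega>"
      using shS[OF w, of "t - int (Suc K)"] by (simp add: algebra_simps)
    have e2: "c t (theta \<omega>) (Suc K) = b (t+1) \<omega> * c t \<omega> K"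
      using c_shift[OF w, of t "Suc K"] trace_coef_Suc[of ppi mu gam lam lamb S A "t+1" \<omega> K] by simp
    show "?h (theta \<omega>) = (D t \<omega> * c t \<omega> K) *\<^sub>R X (t - int K) \<omega> - (a t \<omega> * c t \<omega> K) *\<^sub>R X (t - int K) \<omega>"
      unfolding e1 e2 D_shift[OF w] using D_rec[OF w, of t]
      by (simp add: algebra_simps scaleR_diff_left[symmetric])
  qed
  also have "\<dots> = (\<integral>\<omega>. (D t \<omega> * c t \<omega> K) *\<^sub>R X (t - int K) \<omega> \<partial>M) - (\<integral>\<omega>. (a t \<omega> * c t \<omega> K) *\<^sub>R X (t - int K) \<omega> \<partial>M)"
    by (rule Bochner_Integration.integral_diff[OF intT intP])
  finally show ?thesis .
qed

end

context L begin

abbreviation "TT t K \<equiv> (\<integral>\<omega>. (D t \<omega> * c t \<omega> K) *\<^sub>R X (t - int K) \<omega> \<partial>M)"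
abbreviation "PP t K \<equiv> (\<integral>\<omega>. (a t \<omega> * c t \<omega> K) *\<^sub>R X (t - int K) \<omega> \<partial>M)"

lemma stepC_sum: "TT t 0 = (\<Sum>k<K. PP t k) + TT t K"
proof (induction K)
  case 0 then show ?case by simp
next
  case (Suc K) then show ?case using stepC[of t K] by simp
qed

lemma TT0: "TT t 0 = (\<integral>\<omega>. D t \<omega> *\<^sub>R X t \<omega> \<partial>M)"
  by (simp add: trace_coef_def)

lemma stepD: "(\<lambda>K. TT t K) \<longlonglongrightarrow> 0"
proof -
  have "(\<lambda>K. TT t K) \<longlonglongrightarrow> (\<integral>\<omega>. (0::real^'n) \<partial>M)"
  proof (rule integral_dominated_convergence[where w="\<lambda>\<omega>. \<bar>D t \<omega>\<bar> * AT t \<omega>"])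
    show "(\<lambda>\<omega>. 0::real^'n) \<in> borel_measurable M" by simp
    show "(\<lambda>\<omega>. (D t \<omega> * c t \<omega> K) *\<^sub>R X (t - int K) \<omega>) \<in> borel_measurable M" for K by measurable
    show "integrable M (\<lambda>\<omega>. \<bar>D t \<omega>\<bar> * AT t \<omega>)" by (rule D_AT_int)
    show "AE \<omega> in M. (\<lambda>K. (D t \<omega> * c t \<omega> K) *\<^sub>R X (t - int K) \<omega>) \<longlonglongrightarrow> 0"
    proof (rule AE_I2)
      fix \<omega> assume w: "\<omega> \<in> space M"
      have "(\<lambda>K. \<bar>c t \<omega> K\<bar> * norm (X (t - int K) \<omega>)) \<longlonglongrightarrow> 0"
        by (rule summable_LIMSEQ_zero) (use well_defined w in auto)
      then have "(\<lambda>K. \<bar>D t \<omega>\<bar> * (\<bar>c t \<omega> K\<bar> * norm (X (t - int K) \<omega>))) \<longlonglongrightarrow> \<bar>D t \<omega>\<bar> * 0"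
        by (intro tendsto_mult tendsto_const)
      then have "(\<lambda>K. norm ((D t \<omega> * c t \<omega> K) *\<^sub>R X (t - int K) \<omega>)) \<longlonglongrightarrow> 0"
        by (simp add: abs_mult mult.assoc)
      then show "(\<lambda>K. (D t \<omega> * c t \<omega> K) *\<^sub>R X (t - int K) \<omega>) \<longlonglongrightarrow> 0"
        by (rule tendsto_norm_zero_cancel)
    qed
    show "AE \<omega> in M. norm ((D t \<omega> * c t \<omega> K) *\<^sub>R X (t - int K) \<omega>) \<le> \<bar>D t \<omega>\<bar> * AT t \<omega>" for K
    proof (rule AE_I2)
      fix \<omega> assume w: "\<omega> \<in> space M"
      have "norm ((D t \<omega> * c t \<omega> K) *\<^sub>R X (t - int K) \<omega>) = \<bar>D t \<omega>\<bar> * (\<bar>c t \<omega> K\<bar> * norm (X (t - int K) \<omega>))"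
        by (simp add: abs_mult)
      also have "\<dots> \<le> \<bar>D t \<omega>\<bar> * AT t \<omega>" by (rule mult_left_mono[OF AT_term[OF w]]) simp
      finally show "norm ((D t \<omega> * c t \<omega> K) *\<^sub>R X (t - int K) \<omega>) \<le> \<bar>D t \<omega>\<bar> * AT t \<omega>" .
    qed
  qed
  then show ?thesis by simp
qed

lemma stepB: "(\<lambda>K. \<Sum>k<K. PP t k) \<longlonglongrightarrow> (\<integral>\<omega>. a t \<omega> *\<^sub>R z t \<omega> \<partial>M)"
proof -
  have eq: "(\<Sum>k<K. PP t k) = (\<integral>\<omega>. a t \<omega> *\<^sub>R (\<Sum>k<K. c t \<omega> k *\<^sub>R X (t - int k) \<omega>) \<partial>M)" for K
  proof -
    have "(\<Sum>k<K. PP t k) = (\<integral>\<omega>. (\<Sum>k<K. (a t \<omega> * c t \<omega> k) *\<^sub>R X (t - int k) \<omega>) \<partial>M)"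
      by (rule Bochner_Integration.integral_sum[symmetric]) (rule intP)
    also have "\<dots> = (\<integral>\<omega>. a t \<omega> *\<^sub>R (\<Sum>k<K. c t \<omega> k *\<^sub>R X (t - int k) \<omega>) \<partial>M)"
      by (simp add: scaleR_sum_right)
    finally show ?thesis .
  qed
  have "(\<lambda>K. (\<integral>\<omega>. a t \<omega> *\<^sub>R (\<Sum>k<K. c t \<omega> k *\<^sub>R X (t - int k) \<omega>) \<partial>M)) \<longlonglongrightarrow> (\<integral>\<omega>. a t \<omega> *\<^sub>R z t \<omega> \<partial>M)"
  proof (rule integral_dominated_convergence[where w="\<lambda>\<omega>. \<bar>a t \<omega>\<bar> * AT t \<omega>"])
    show "(\<lambda>\<omega>. a t \<omega> *\<^sub>R z t \<omega>) \<in> borel_measurable M" by measurable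
    show "(\<lambda>\<omega>. a t \<omega> *\<^sub>R (\<Sum>k<K. c t \<omega> k *\<^sub>R X (t - int k) \<omega>)) \<in> borel_measurable M" for K by measurable
    show "integrable M (\<lambda>\<omega>. \<bar>a t \<omega>\<bar> * AT t \<omega>)" by (rule db_AT_int) simp
    show "AE \<omega> in M. (\<lambda>K. a t \<omega> *\<^sub>R (\<Sum>k<K. c t \<omega> k *\<^sub>R X (t - int k) \<omega>)) \<longlonglongrightarrow> a t \<omega> *\<^sub>R z t \<omega>"
    proof (rule AE_I2)
      fix \<omega> assume w: "\<omega> \<in> space M"
      have "(\<lambda>K. \<Sum>k<K. c t \<omega> k *\<^sub>R X (t - int k) \<omega>) \<longlonglongrightarrow> z t \<omega>"
        unfolding zbar_def by (rule summable_LIMSEQ[OF z_summable[OF w]])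
      then show "(\<lambda>K. a t \<omega> *\<^sub>R (\<Sum>k<K. c t \<omega> k *\<^sub>R X (t - int k) \<omega>)) \<longlonglongrightarrow> a t \<omega> *\<^sub>R z t \<omega>"
        by (intro tendsto_scaleR tendsto_const)
    qed
    show "AE \<omega> in M. norm (a t \<omega> *\<^sub>R (\<Sum>k<K. c t \<omega> k *\<^sub>R X (t - int k) \<omega>)) \<le> \<bar>a t \<omega>\<bar> * AT t \<omega>" for K
    proof (rule AE_I2)
      fix \<omega> assume w: "\<omega> \<in> space M"
      have "norm (\<Sum>k<K. c t \<omega> k *\<^sub>R X (t - int k) \<omega>) \<le> (\<Sum>k<K. \<bar>c t \<omega> k\<bar> * norm (X (t - int k) \<omega>))"
        using norm_sum[of "\<lambda>k. c t \<omega> k *\<^sub>R X (t - int k) \<omega>" "{..<K}"] by simp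
      also have "\<dots> \<le> AT t \<omega>" by (rule AT_partial[OF w])
      finally have "norm (\<Sum>k<K. c t \<omega> k *\<^sub>R X (t - int k) \<omega>) \<le> AT t \<omega>" .
      then show "norm (a t \<omega> *\<^sub>R (\<Sum>k<K. c t \<omega> k *\<^sub>R X (t - int k) \<omega>)) \<le> \<bar>a t \<omega>\<bar> * AT t \<omega>"
        by (simp add: mult_left_mono)
    qed
  qed
  then show ?thesis unfolding eq .
qed

lemma forward_backward: "(\<integral>\<omega>. D t \<omega> *\<^sub>R X t \<omega> \<partial>M) = (\<integral>\<omega>. a t \<omega> *\<^sub>R z t \<omega> \<partial>M)"
proof -
  have "(\<lambda>K. \<Sum>k<K. PP t k) = (\<lambda>K. TT t 0 - TT t K)"
    using stepC_sum[of t] by (auto simp: algebra_simps)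
  moreover have "(\<lambda>K. TT t 0 - TT t K) \<longlonglongrightarrow> TT t 0 - 0"
    by (intro tendsto_diff tendsto_const stepD)
  ultimately have "(\<lambda>K. \<Sum>k<K. PP t k) \<longlonglongrightarrow> TT t 0" by simp
  from LIMSEQ_unique[OF this stepB] show ?thesis unfolding TT0 .
qed

end

context L begin

lemma hist_subalg: "subalgebra M (hist M S A R s)"
  unfolding hist_def by (rule gen_sigma_subalg) (use S_meas A_meas R_meas in auto)

lemma hist_sfs: "sigma_finite_subalgebra M (hist M S A R s)"
proof (rule finite_measure_subalgebra_is_sigma_finite)
  show "finite_measure_subalgebra M (hist M S A R s)"
    unfolding finite_measure_subalgebra_def finite_measure_subalgebra_axioms_def
    using prob prob_space.finite_measure hist_subalg by auto
qed

lemma hS: "k \<le> s \<Longrightarrow> S k \<in> hist M S A R s \<rightarrow>\<^sub>M count_space UNIV"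
  unfolding hist_def by (rule gen_sigma_S) simp
lemma hA: "k < s \<Longrightarrow> A k \<in> hist M S A R s \<rightarrow>\<^sub>M count_space UNIV"
  unfolding hist_def by (rule gen_sigma_A) simp
lemma hR: "k \<le> s \<Longrightarrow> R k \<in> borel_measurable (hist M S A R s)"
  unfolding hist_def by (rule gen_sigma_R) simp

lemma GL_future: "GL s \<in> borel_measurable (future M S A R s)"
  by (rule Glam_meas) (unfold future_def; rule gen_sigma_S gen_sigma_A gen_sigma_R; simp)+

abbreviation "Y t \<omega> \<equiv> (rh t \<omega>)\<^sup>2 * gam (S (t+1) \<omega>) * lam (S (t+1) \<omega>) * Gb t \<omega>"

lemma Y_F: "Y t \<in> borel_measurable (hist M S A R (t+1))"
proof -
  have [measurable]: "rh t \<in> borel_measurable (hist M S A R (t+1))"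
    by (rule rho_meas) (auto intro: hS hA)
  have [measurable]: "Gb t \<in> borel_measurable (hist M S A R (t+1))"
    by (rule Gbar_meas) (auto intro: hS hR)
  have [measurable]: "S (t+1) \<in> hist M S A R (t+1) \<rightarrow>\<^sub>M count_space UNIV" by (rule hS) simp
  show ?thesis by measurable
qed

lemma z_F: "z t \<in> borel_measurable (hist M S A R (t+1))"
  by (rule zbar_meas) (auto intro: hS hA)

lemma z_F_comp[measurable]: "(\<lambda>\<omega>. z t \<omega> $ i) \<in> borel_measurable (hist M S A R (t+1))"
  by (rule borel_measurable_continuous_on[OF linear_continuous_on[OF bounded_linear_vec_nth] z_F])

lemma fg_int:
  assumes g: "g = GL \<or> g = gb"
  shows "integrable M (\<lambda>\<omega>. Y t \<omega> * (z t \<omega> $ i) * g (t+1) \<omega>)"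
proof (rule Bochner_Integration.integrable_bound)
  let ?f = "\<lambda>\<omega>. Y t \<omega> * (z t \<omega> $ i)"
  have fF: "?f \<in> borel_measurable (hist M S A R (t+1))"
    using Y_F z_F by measurable
  show "integrable M (\<lambda>\<omega>. \<bar>Y t \<omega> * g (t+1) \<omega>\<bar> * AT t \<omega>)" using g Fint by auto
  show "(\<lambda>\<omega>. ?f \<omega> * g (t+1) \<omega>) \<in> borel_measurable M"
    by (rule borel_measurable_times[OF measurable_from_subalg[OF hist_subalg fF]]) (use g in auto)
  show "AE \<omega> in M. norm (?f \<omega> * g (t+1) \<omega>) \<le> norm (\<bar>Y t \<omega> * g (t+1) \<omega>\<bar> * AT t \<omega>)"
  proof (rule AE_I2)
    fix \<omega> assume w: "\<omega> \<in> space M"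
    have at: "0 \<le> AT t \<omega>" by (rule AT_nonneg[OF w])
    have "norm (?f \<omega> * g (t+1) \<omega>) = \<bar>Y t \<omega> * g (t+1) \<omega>\<bar> * \<bar>z t \<omega> $ i\<bar>"
      by (simp add: abs_mult)
    also have "\<dots> \<le> \<bar>Y t \<omega> * g (t+1) \<omega>\<bar> * AT t \<omega>" by (rule mult_left_mono[OF z_comp[OF w]]) simp
    finally show "norm (?f \<omega> * g (t+1) \<omega>) \<le> norm (\<bar>Y t \<omega> * g (t+1) \<omega>\<bar> * AT t \<omega>)"
      using at by (simp add: abs_mult)
  qed
qed

lemma stepA_comp:
  "(\<integral>\<omega>. Y t \<omega> * (z t \<omega> $ i) * gb (t+1) \<omega> \<partial>M) = (\<integral>\<omega>. Y t \<omega> * (z t \<omega> $ i) * GL (t+1) \<omega> \<partial>M)"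
proof -
  interpret F: sigma_finite_subalgebra M "hist M S A R (t+1)" by (rule hist_sfs)
  let ?f = "\<lambda>\<omega>. Y t \<omega> * (z t \<omega> $ i)"
  have fF: "?f \<in> borel_measurable (hist M S A R (t+1))"
    using Y_F z_F by measurable
  have int_g: "integrable M (\<lambda>\<omega>. ?f \<omega> * g (t+1) \<omega>)" if g: "g = GL \<or> g = gb" for g
  proof (rule Bochner_Integration.integrable_bound)
    show "integrable M (\<lambda>\<omega>. \<bar>Y t \<omega> * g (t+1) \<omega>\<bar> * AT t \<omega>)" using g Fint by auto
    have [measurable]: "g s \<in> borel_measurable M" for s using g by auto
    show "(\<lambda>\<omega>. ?f \<omega> * g (t+1) \<omega>) \<in> borel_measurable M"
      by (rule borel_measurable_times[OF measurable_from_subalg[OF hist_subalg fF]]) (use g in auto)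
    show "AE \<omega> in M. norm (?f \<omega> * g (t+1) \<omega>) \<le> norm (\<bar>Y t \<omega> * g (t+1) \<omega>\<bar> * AT t \<omega>)"
    proof (rule AE_I2)
      fix \<omega> assume w: "\<omega> \<in> space M"
      have at: "0 \<le> AT t \<omega>" by (rule AT_nonneg[OF w])
      have "norm (?f \<omega> * g (t+1) \<omega>) = \<bar>Y t \<omega> * g (t+1) \<omega>\<bar> * \<bar>z t \<omega> $ i\<bar>"
        by (simp add: abs_mult)
      also have "\<dots> \<le> \<bar>Y t \<omega> * g (t+1) \<omega>\<bar> * AT t \<omega>" by (rule mult_left_mono[OF z_comp[OF w]]) simp
      finally show "norm (?f \<omega> * g (t+1) \<omega>) \<le> norm (\<bar>Y t \<omega> * g (t+1) \<omega>\<bar> * AT t \<omega>)"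
        using at by (simp add: abs_mult)
    qed
  qed
  have e1: "(\<integral>\<omega>. ?f \<omega> * gb (t+1) \<omega> \<partial>M) = (\<integral>\<omega>. ?f \<omega> * real_cond_exp M (hist M S A R (t+1)) (gb (t+1)) \<omega> \<partial>M)"
    by (rule F.real_cond_exp_intg(2)[symmetric]) (use int_g[of gb] fF in auto)
  have e3: "(\<integral>\<omega>. ?f \<omega> * GL (t+1) \<omega> \<partial>M) = (\<integral>\<omega>. ?f \<omega> * real_cond_exp M (hist M S A R (t+1)) (GL (t+1)) \<omega> \<partial>M)"
    by (rule F.real_cond_exp_intg(2)[symmetric]) (use int_g[of GL] fF in auto)
  have ae1: "AE \<omega> in M. real_cond_exp M (hist M S A R (t+1)) (gb (t+1)) \<omega>
      = real_cond_exp M (state_sigma M S A R (t+1)) (GL (t+1)) \<omega>" using unbiased by auto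
  have ae2: "AE \<omega> in M. real_cond_exp M (hist M S A R (t+1)) (GL (t+1)) \<omega>
      = real_cond_exp M (state_sigma M S A R (t+1)) (GL (t+1)) \<omega>"
    using markov GL_future Fint by blast
  have e2: "(\<integral>\<omega>. ?f \<omega> * real_cond_exp M (hist M S A R (t+1)) (gb (t+1)) \<omega> \<partial>M)
      = (\<integral>\<omega>. ?f \<omega> * real_cond_exp M (hist M S A R (t+1)) (GL (t+1)) \<omega> \<partial>M)"
  proof (rule integral_cong_AE)
    have fM: "?f \<in> borel_measurable M" by (rule measurable_from_subalg[OF hist_subalg fF])
    show "(\<lambda>\<omega>. ?f \<omega> * real_cond_exp M (hist M S A R (t+1)) (gb (t+1)) \<omega>) \<in> borel_measurable M"
      by (rule borel_measurable_times[OF fM borel_measurable_cond_exp2])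
    show "(\<lambda>\<omega>. ?f \<omega> * real_cond_exp M (hist M S A R (t+1)) (GL (t+1)) \<omega>) \<in> borel_measurable M"
      by (rule borel_measurable_times[OF fM borel_measurable_cond_exp2])
  qed (use ae1 ae2 in auto)
  show ?thesis using e1 e2 e3 by simp
qed

lemma vec_int_comp: "integrable M (f :: 'w \<Rightarrow> real^'n) \<Longrightarrow> (\<integral>\<omega>. f \<omega> \<partial>M) $ i = (\<integral>\<omega>. f \<omega> $ i \<partial>M)"
  by (rule integral_bounded_linear[OF bounded_linear_vec_nth, symmetric])

lemma dbz_int: "g = GL \<or> g = gb \<Longrightarrow> integrable M (\<lambda>\<omega>. delta_bar ppi mu gam lam x w wsq S A R g t \<omega> *\<^sub>R z t \<omega>)"
proof (rule Bochner_Integration.integrable_bound[OF db_AT_int])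
  assume g: "g = GL \<or> g = gb"
  then show "g = GL \<or> g = gb" .
  have [measurable]: "g s \<in> borel_measurable M" for s using g by auto
  show "(\<lambda>\<omega>. delta_bar ppi mu gam lam x w wsq S A R g t \<omega> *\<^sub>R z t \<omega>) \<in> borel_measurable M"
    unfolding delta_bar_def by measurable
  show "AE \<omega> in M. norm (delta_bar ppi mu gam lam x w wsq S A R g t \<omega> *\<^sub>R z t \<omega>) \<le>
      norm (\<bar>delta_bar ppi mu gam lam x w wsq S A R g t \<omega>\<bar> * AT t \<omega>)"
  proof (rule AE_I2)
    fix \<omega> assume w: "\<omega> \<in> space M"
    have at: "0 \<le> AT t \<omega>" by (rule AT_nonneg[OF w])
    show "norm (delta_bar ppi mu gam lam x w wsq S A R g t \<omega> *\<^sub>R z t \<omega>) \<le>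
      norm (\<bar>delta_bar ppi mu gam lam x w wsq S A R g t \<omega>\<bar> * AT t \<omega>)"
      using mult_left_mono[OF z_norm[OF w, of t] abs_ge_zero] at by (simp add: abs_mult)
  qed
qed

lemma stepA: "(\<integral>\<omega>. ab t \<omega> *\<^sub>R z t \<omega> \<partial>M) = (\<integral>\<omega>. a t \<omega> *\<^sub>R z t \<omega> \<partial>M)"
proof (rule vec_eq_iff[THEN iffD2], rule allI)
  fix i
  let ?f = "\<lambda>\<omega>. Y t \<omega> * (z t \<omega> $ i)"
  have ia: "integrable M (\<lambda>\<omega>. a t \<omega> * z t \<omega> $ i)"
    using integrable_bounded_linear[OF bounded_linear_vec_nth dbz_int[of GL t], of i] by simp
  have i1: "integrable M (\<lambda>\<omega>. ?f \<omega> * gb (t+1) \<omega>)" by (rule fg_int) simp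
  have i2: "integrable M (\<lambda>\<omega>. ?f \<omega> * GL (t+1) \<omega>)" by (rule fg_int) simp
  have "(\<integral>\<omega>. ab t \<omega> *\<^sub>R z t \<omega> \<partial>M) $ i = (\<integral>\<omega>. ab t \<omega> * z t \<omega> $ i \<partial>M)"
    using vec_int_comp[OF dbz_int[of gb t], of i] by simp
  also have "\<dots> = (\<integral>\<omega>. a t \<omega> * z t \<omega> $ i + (2 * (?f \<omega> * gb (t+1) \<omega>) - 2 * (?f \<omega> * GL (t+1) \<omega>)) \<partial>M)"
    by (rule Bochner_Integration.integral_cong[OF refl]) (simp add: delta_bar_def algebra_simps)
  also have "\<dots> = (\<integral>\<omega>. a t \<omega> * z t \<omega> $ i \<partial>M) + (2 * (\<integral>\<omega>. ?f \<omega> * gb (t+1) \<omega> \<partial>M) - 2 * (\<integral>\<omega>. ?f \<omega> * GL (t+1) \<omega> \<partial>M))"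
    using ia i1 i2 by simp
  also have "\<dots> = (\<integral>\<omega>. a t \<omega> * z t \<omega> $ i \<partial>M)" using stepA_comp[of t i] by simp
  also have "\<dots> = (\<integral>\<omega>. a t \<omega> *\<^sub>R z t \<omega> \<partial>M) $ i"
    using vec_int_comp[OF dbz_int[of GL t], of i] by simp
  finally show "(\<integral>\<omega>. ab t \<omega> *\<^sub>R z t \<omega> \<partial>M) $ i = (\<integral>\<omega>. a t \<omega> *\<^sub>R z t \<omega> \<partial>M) $ i" .
qed

lemma main: "(\<integral>\<omega>. D t \<omega> *\<^sub>R X t \<omega> \<partial>M) = (\<integral>\<omega>. ab t \<omega> *\<^sub>R z t \<omega> \<partial>M)"
  using forward_backward[of t] stepA[of t] by simp

end

theorem theorem1:
  fixes M :: "'w measure"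
    and S :: "int \<Rightarrow> 'w \<Rightarrow> 's::finite"
    and A :: "int \<Rightarrow> 'w \<Rightarrow> 'a::finite"
    and R :: "int \<Rightarrow> 'w \<Rightarrow> real"
    and P :: "'s \<Rightarrow> 'a \<Rightarrow> 's \<Rightarrow> real"
    and ppi mu :: "'s \<Rightarrow> 'a \<Rightarrow> real"
    and gam lam lamb :: "'s \<Rightarrow> real"
    and x :: "'s \<Rightarrow> real^'n"
    and w wsq :: "real^'n"
    and gb :: "int \<Rightarrow> 'w \<Rightarrow> real"
    and theta :: "'w \<Rightarrow> 'w"
    and t :: int
  assumes prob: "prob_space M"
    and S_meas: "\<forall>s. S s \<in> M \<rightarrow>\<^sub>M count_space UNIV"
    and A_meas: "\<forall>s. A s \<in> M \<rightarrow>\<^sub>M count_space UNIV"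
    and R_meas: "\<forall>s. R s \<in> borel_measurable M"
    and pi_policy: "\<forall>s a. 0 \<le> ppi s a" "\<forall>s. (\<Sum>a\<in>UNIV. ppi s a) = 1"
    and mu_policy: "\<forall>s a. 0 \<le> mu s a" "\<forall>s. (\<Sum>a\<in>UNIV. mu s a) = 1"
    and coverage: "\<forall>s a. 0 < ppi s a \<longrightarrow> 0 < mu s a"
    and P_kernel: "\<forall>s a s'. 0 \<le> P s a s'" "\<forall>s a. (\<Sum>s'\<in>UNIV. P s a s') = 1"
    and gam_range: "\<forall>s. 0 \<le> gam s \<and> gam s \<le> 1"
    and lam_range: "\<forall>s. 0 \<le> lam s \<and> lam s \<le> 1"
    and lamb_range: "\<forall>s. 0 \<le> lamb s \<and> lamb s \<le> 1"
    and behaviour: "\<forall>s a. AE \<omega> in M.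
          real_cond_exp M (hist M S A R s) (\<lambda>\<omega>. indicator {a} (A s \<omega>)) \<omega> = mu (S s \<omega>) a"
    and transition: "\<forall>s s'. AE \<omega> in M.
          real_cond_exp M (histA M S A R s) (\<lambda>\<omega>. indicator {s'} (S (s+1) \<omega>)) \<omega>
            = P (S s \<omega>) (A s \<omega>) s'"
    and markov: "\<forall>s Y. Y \<in> borel_measurable (future M S A R s) \<longrightarrow> integrable M Y \<longrightarrow>
          (AE \<omega> in M. real_cond_exp M (hist M S A R s) Y \<omega>
                        = real_cond_exp M (state_sigma M S A R s) Y \<omega>)"
    and shift_meas: "theta \<in> M \<rightarrow>\<^sub>M M"
    and shift_preserving: "distr M M theta = M"
    and shift_process: "\<forall>s. \<forall>\<omega>\<in>space M.
          S (s+1) \<omega> = S s (theta \<omega>) \<and> A (s+1) \<omega> = A s (theta \<omega>) \<and> R (s+1) \<omega> = R s (theta \<omega>)"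
    and unbiased: "\<forall>s. AE \<omega> in M.
          real_cond_exp M (hist M S A R s) (gb s) \<omega>
            = real_cond_exp M (state_sigma M S A R s) (Glam ppi mu gam lam x w S A R s) \<omega>"
    and well_defined: "\<forall>s. \<forall>\<omega>\<in>space M.
          summable (Glam_term ppi mu gam lam x w S A R s \<omega>)
          \<and> summable (Vbar_term ppi mu gam lam lamb x w wsq S A R s \<omega>)
          \<and> summable (\<lambda>k. \<bar>trace_coef ppi mu gam lam lamb S A s \<omega> k\<bar> * norm (x (S (s - int k) \<omega>)))"
    and finite_expectations: "\<forall>s.
          integrable M (Glam ppi mu gam lam x w S A R s)
          \<and> integrable M (gb s)
          \<and> integrable M (abs_trace ppi mu gam lam lamb x S A s)
          \<and> integrable M (\<lambda>\<omega>. \<bar>Vbar ppi mu gam lam lamb x w wsq S A R s \<omega>\<bar>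
                                * abs_trace ppi mu gam lam lamb x S A s \<omega>)
          \<and> integrable M (\<lambda>\<omega>. (rho ppi mu S A s \<omega>)\<^sup>2 * (Gbar gam lam x w S R s \<omega>)\<^sup>2
                                * abs_trace ppi mu gam lam lamb x S A s \<omega>)
          \<and> integrable M (\<lambda>\<omega>. \<bar>(rho ppi mu S A s \<omega>)\<^sup>2 * gam (S (s+1) \<omega>) * lam (S (s+1) \<omega>)
                                   * Gbar gam lam x w S R s \<omega> * Glam ppi mu gam lam x w S A R (s+1) \<omega>\<bar>
                                * abs_trace ppi mu gam lam lamb x S A s \<omega>)
          \<and> integrable M (\<lambda>\<omega>. \<bar>(rho ppi mu S A s \<omega>)\<^sup>2 * gam (S (s+1) \<omega>) * lam (S (s+1) \<omega>)
                                   * Gbar gam lam x w S R s \<omega> * gb (s+1) \<omega>\<bar>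
                                * abs_trace ppi mu gam lam lamb x S A s \<omega>)"
  shows "(\<integral>\<omega>. delta_lamb ppi mu gam lam lamb x w wsq S A R t \<omega> *\<^sub>R x (S t \<omega>) \<partial>M)
         = (\<integral>\<omega>. delta_bar ppi mu gam lam x w wsq S A R gb t \<omega> *\<^sub>R zbar ppi mu gam lam lamb x S A t \<omega> \<partial>M)"
proof -
  interpret L M S A R ppi mu gam lam lamb x w wsq gb theta
    by (rule L.intro[OF prob S_meas A_meas R_meas gam_range lam_range markov shift_meas
        shift_preserving shift_process unbiased well_defined finite_expectations])
  show ?thesis by (rule main)
qed

end
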